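(* Let $d\geq1$, $s\in(0,1)$, and let $\Omega\subseteq\mathbb{R}^d$ be open and bounded. For any $x^0\in\Omega\cup(\mathbb{R}^d\setminus\overline\Omega)$ and any $\lambda\in\mathbb{R}^d$ there exists $\varphi\in C_c^\infty(\Omega)$ such that $\nabla^s\varphi(x^0)=\lambda$.
   Context: For $\varphi\in C_c^\infty(\mathbb{R}^d)$ the fractional gradient is $\nabla^s\varphi(x)=\mu_s\int_{\mathbb{R}^d}\frac{(\varphi(x)-\varphi(y))(x-y)}{|x-y|^{d+s+1}}\,dy$, $x\in\mathbb{R}^d$, with $\mu_s=2^s\pi^{-d/2}\frac{\Gamma((d+s+1)/2)}{\Gamma((1-s)/2)}$. *)

theory Defs
  imports "HOL-Analysis.Analysis"
begin

fun Ck :: "nat \<Rightarrow> ('a::euclidean_space \<Rightarrow> real) \<Rightarrow> bool" where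
  "Ck 0 f = continuous_on UNIV f"
| "Ck (Suc k) f = (f differentiable_on UNIV \<and>
      (\<forall>v. Ck k (\<lambda>x. frechet_derivative f (at x) v)))"

definition smooth_fun :: "('a::euclidean_space \<Rightarrow> real) \<Rightarrow> bool" where
  "smooth_fun f \<longleftrightarrow> (\<forall>k. Ck k f)"

definition tsupport :: "('a::euclidean_space \<Rightarrow> real) \<Rightarrow> 'a set" where
  "tsupport f = closure {x. f x \<noteq> 0}"

definition Cc_inf :: "'a::euclidean_space set \<Rightarrow> ('a \<Rightarrow> real) set" where
  "Cc_inf \<Omega> = {f. smooth_fun f \<and> compact (tsupport f) \<and> tsupport f \<subseteq> \<Omega>}"

definition mu_s :: "real \<Rightarrow> nat \<Rightarrow> real" where
  "mu_s s d = 2 powr s * pi powr (- real d / 2) *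
     Gamma ((real d + s + 1) / 2) / Gamma ((1 - s) / 2)"

definition frac_grad :: "real \<Rightarrow> ('a::euclidean_space \<Rightarrow> real) \<Rightarrow> 'a \<Rightarrow> 'a" where
  "frac_grad s f x = mu_s s DIM('a) *\<^sub>R
     (LINT y|lborel. ((f x - f y) / norm (x - y) powr (real DIM('a) + s + 1)) *\<^sub>R (x - y))"

end

theory Submission
  imports Defs "HOL-Computational_Algebra.Polynomial"
begin


definition Ef :: "real poly \<Rightarrow> real \<Rightarrow> real" where
  "Ef p t = (if t > 0 then poly p (inverse t) * exp (- inverse t) else 0)"

definition nextp :: "real poly \<Rightarrow> real poly" where
  "nextp p = [:0,0,1:] * (p - pderiv p)"

lemma poly_exp_lim: "((\<lambda>u::real. poly q u * exp (- u)) \<longlongrightarrow> 0) at_top"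
proof -
  have "((\<lambda>u. \<Sum>i\<le>degree q. coeff q i * (u ^ i / exp u)) \<longlongrightarrow> (\<Sum>i\<le>degree q. coeff q i * 0)) at_top"
    by (intro tendsto_intros tendsto_power_div_exp_0)
  moreover have "(\<lambda>u. \<Sum>i\<le>degree q. coeff q i * (u ^ i / exp u)) = (\<lambda>u. poly q u * exp (- u))"
    by (auto simp: poly_altdef sum_distrib_right exp_minus divide_inverse mult.assoc)
  ultimately show ?thesis by simp
qed

lemma poly_exp_lim0: "((\<lambda>t. poly q (inverse t) * exp (- inverse t)) \<longlongrightarrow> 0) (at_right (0::real))"
  using filterlim_compose[OF poly_exp_lim filterlim_inverse_at_top_right] by (simp add: o_def)

lemma Ef_deriv_pos:
  assumes "t > 0"
  shows "(Ef p has_real_derivative Ef (nextp p) t) (at t)"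
proof -
  have ev: "\<forall>\<^sub>F y in nhds t. (\<lambda>t. poly p (inverse t) * exp (- inverse t)) y = Ef p y"
    using eventually_nhds_in_open[of "{0<..}" t] assms
    by (auto elim!: eventually_mono simp: Ef_def)
  have d: "((\<lambda>t. poly p (inverse t) * exp (- inverse t)) has_real_derivative
      poly (pderiv p) (inverse t) * (- inverse (t^2)) * exp (- inverse t)
      + poly p (inverse t) * (exp (- inverse t) * inverse (t^2))) (at t)"
    using assms
    by (auto intro!: derivative_eq_intros DERIV_chain2[OF poly_DERIV] simp: power2_eq_square field_simps)
  have "poly (pderiv p) (inverse t) * (- inverse (t^2)) * exp (- inverse t)
      + poly p (inverse t) * (exp (- inverse t) * inverse (t^2)) = Ef (nextp p) t"
    using assms by (simp add: Ef_def nextp_def power2_eq_square field_simps)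
  with d have "((\<lambda>t. poly p (inverse t) * exp (- inverse t)) has_real_derivative Ef (nextp p) t) (at t)"
    by simp
  then show ?thesis
    using DERIV_cong_ev[OF refl ev refl] by simp
qed

lemma Ef_deriv_neg:
  assumes "t < 0"
  shows "(Ef p has_real_derivative Ef (nextp p) t) (at t)"
proof -
  have ev: "\<forall>\<^sub>F y in nhds t. (\<lambda>_. 0) y = Ef p y"
    using eventually_nhds_in_open[of "{..<0}" t] assms
    by (auto elim!: eventually_mono simp: Ef_def)
  have "((\<lambda>_. 0) has_real_derivative 0) (at t)" by simp
  then show ?thesis
    using DERIV_cong_ev[OF refl ev refl] assms by (simp add: Ef_def[abs_def])
qed

lemma Ef_deriv_0:
  "(Ef p has_real_derivative Ef (nextp p) 0) (at 0)"
proof -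
  have "Ef (nextp p) 0 = 0" by (simp add: Ef_def)
  moreover have "((\<lambda>y. (Ef p y - Ef p 0) / (y - 0)) \<longlongrightarrow> 0) (at (0::real))"
    unfolding filterlim_at_split
  proof
    show "((\<lambda>y. (Ef p y - Ef p 0) / (y - 0)) \<longlongrightarrow> 0) (at_left 0)"
      by (rule tendsto_eventually) (auto simp: Ef_def eventually_at_left_field intro: exI[of _ "-1"])
  next
    have "\<forall>\<^sub>F y in at_right 0. poly (pCons 0 p) (inverse y) * exp (- inverse y) = (Ef p y - Ef p 0) / (y - 0)"
      by (auto simp: Ef_def eventually_at_right_field field_simps intro!: exI[of _ 1])
    then show "((\<lambda>y. (Ef p y - Ef p 0) / (y - 0)) \<longlongrightarrow> 0) (at_right 0)"
      using tendsto_cong poly_exp_lim0 by fastforce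
  qed
  ultimately show ?thesis by (simp add: has_field_derivative_iff)
qed

lemma Ef_deriv: "(Ef p has_real_derivative Ef (nextp p) t) (at t)"
  using Ef_deriv_pos Ef_deriv_neg Ef_deriv_0 by (metis linorder_neqE_linordered_idom)



lemma Ck_mono: "Ck (Suc k) f \<Longrightarrow> Ck k f"
proof (induction k arbitrary: f)
  case 0
  then show ?case by (auto intro: differentiable_imp_continuous_on)
next
  case (Suc k)
  then show ?case by (metis Ck.simps(2))
qed


lemma Ck_const: "Ck k (\<lambda>x. c)"
proof (induction k arbitrary: c)
  case 0 then show ?case by simp
next
  case (Suc k)
  have "frechet_derivative (\<lambda>x. c) (at x) = (\<lambda>v. 0)" for x :: 'a
    by (metis frechet_derivative_at has_derivative_const)
  then show ?case using Suc by simp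
qed

lemma Ck_add: "Ck k f \<Longrightarrow> Ck k g \<Longrightarrow> Ck k (\<lambda>x. f x + g x)"
proof (induction k arbitrary: f g)
  case 0 then show ?case by (auto intro: continuous_on_add)
next
  case (Suc k)
  have df: "f differentiable at x" "g differentiable at x" for x
    using Suc.prems by (auto simp: differentiable_on_def)
  have "frechet_derivative (\<lambda>x. f x + g x) (at x) = (\<lambda>v. frechet_derivative f (at x) v + frechet_derivative g (at x) v)" for x
    by (rule frechet_derivative_at[symmetric], rule has_derivative_add)
       (use df frechet_derivative_works in blast)+
  then show ?case using Suc df
    by (auto simp: differentiable_on_def intro!: differentiable_add)
qed

lemma Ck_mult: "Ck k f \<Longrightarrow> Ck k g \<Longrightarrow> Ck k (\<lambda>x. f x * g x)"
proof (induction k arbitrary: f g)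
  case 0 then show ?case by (auto intro: continuous_on_mult)
next
  case (Suc k)
  have df: "f differentiable at x" "g differentiable at x" for x
    using Suc.prems by (auto simp: differentiable_on_def)
  have "frechet_derivative (\<lambda>x. f x * g x) (at x) = (\<lambda>v. f x * frechet_derivative g (at x) v + frechet_derivative f (at x) v * g x)" for x
    by (rule frechet_derivative_at[symmetric], rule has_derivative_mult)
       (use df frechet_derivative_works in blast)+
  moreover have "Ck k (\<lambda>x. f x * frechet_derivative g (at x) v + frechet_derivative f (at x) v * g x)" for v
    using Suc.prems Ck_mono[OF Suc.prems(1)] Ck_mono[OF Suc.prems(2)] by (intro Ck_add Suc.IH) auto
  ultimately show ?case using Suc df
    by (auto simp: differentiable_on_def intro!: differentiable_mult)
qed

lemma Ck_cmul: "Ck k f \<Longrightarrow> Ck k (\<lambda>x. c * f x)"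
  using Ck_mult[OF Ck_const] by blast

lemma Ck_inner: "Ck k (\<lambda>x. a \<bullet> x)"
proof (cases k)
  case 0 then show ?thesis by (simp add: continuous_on_inner continuous_on_const continuous_on_id)
next
  case (Suc m)
  have "frechet_derivative (\<lambda>x. a \<bullet> x) (at x) = (\<lambda>v. a \<bullet> v)" for x :: 'a
    by (rule frechet_derivative_at[symmetric]) (rule bounded_linear_imp_has_derivative, rule bounded_linear_inner_right)
  moreover have "(\<lambda>x. a \<bullet> x) differentiable_on UNIV"
    by (simp add: differentiable_on_def bounded_linear_imp_differentiable bounded_linear_inner_right)
  ultimately show ?thesis using Suc by (simp add: Ck_const)
qed

definition qf :: "'a::euclidean_space \<Rightarrow> real \<Rightarrow> 'a \<Rightarrow> real" where
  "qf c r y = r^2 - (y - c) \<bullet> (y - c)"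

lemma qf_deriv: "(qf c r has_derivative (\<lambda>v. - (2 * ((y - c) \<bullet> v)))) (at y)"
proof -
  have D: "((\<lambda>y. y - c) has_derivative (\<lambda>v. v)) (at y)"
    by (intro derivative_eq_intros) auto
  have "((\<lambda>y. r^2 - (y - c) \<bullet> (y - c)) has_derivative (\<lambda>v. 0 - ((y - c) \<bullet> v + v \<bullet> (y - c)))) (at y)"
    by (rule has_derivative_diff[OF has_derivative_const has_derivative_inner[OF D D]])
  then show ?thesis unfolding qf_def by (simp add: inner_commute)
qed

lemma qf_smooth: "Ck k (qf c r)"
proof (cases k)
  case 0
  have "continuous_on UNIV (qf c r)" unfolding qf_def by (intro continuous_intros)
  then show ?thesis using 0 by simp
next
  case (Suc m)
  have "frechet_derivative (qf c r) (at y) v = (-2) * (v \<bullet> y) + 2 * (c \<bullet> v)" for y v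
    using frechet_derivative_at[OF qf_deriv[of c r y], symmetric]
    by (simp add: inner_diff_left inner_commute algebra_simps)
  moreover have "Ck m (\<lambda>y. (-2) * (v \<bullet> y) + 2 * (c \<bullet> v))" for v
    by (intro Ck_add Ck_cmul Ck_inner Ck_const)
  moreover have "qf c r differentiable_on UNIV"
    using qf_deriv by (auto simp: differentiable_on_def differentiable_def)
  ultimately show ?thesis using Suc by simp
qed

lemma Ef_comp_Ck:
  assumes q: "\<And>k. Ck k q"
  shows "Ck k (\<lambda>x. Ef p (q x))"
proof (induction k arbitrary: p)
  case 0
  have "continuous_on UNIV q" using q[of 0] by simp
  moreover have "continuous_on UNIV (Ef p)"
    by (meson DERIV_isCont Ef_deriv continuous_at_imp_continuous_on)
  ultimately show ?case by (auto intro: continuous_on_compose2)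
next
  case (Suc k)
  have dq: "q differentiable at x" for x
    using q[of 1] by (auto simp: differentiable_on_def)
  have D: "((\<lambda>x. Ef p (q x)) has_derivative (\<lambda>v. Ef (nextp p) (q x) * frechet_derivative q (at x) v)) (at x)" for x
  proof -
    have "((Ef p) o q has_derivative (\<lambda>h. Ef (nextp p) (q x) * h) o frechet_derivative q (at x)) (at x)"
      by (rule diff_chain_at) (use dq frechet_derivative_works Ef_deriv[unfolded has_field_derivative_def] in auto)
    then show ?thesis by (simp add: o_def)
  qed
  have "frechet_derivative (\<lambda>x. Ef p (q x)) (at x) = (\<lambda>v. Ef (nextp p) (q x) * frechet_derivative q (at x) v)" for x
    using frechet_derivative_at[OF D] by simp
  moreover have "Ck k (\<lambda>x. Ef (nextp p) (q x) * frechet_derivative q (at x) v)" for v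
    using q[of "Suc k"] by (intro Ck_mult Suc.IH) auto
  moreover have "(\<lambda>x. Ef p (q x)) differentiable_on UNIV"
    using D by (auto simp: differentiable_on_def differentiable_def)
  ultimately show ?case by simp
qed



lemma pos_int:
  fixes h :: "'a::euclidean_space \<Rightarrow> real"
  assumes int: "integrable lborel h" and nn: "\<And>x. h x \<ge> 0" and cont: "isCont h c" and pos: "h c > 0"
  shows "integral\<^sup>L lborel h > 0"
proof -
  have ge: "integral\<^sup>L lborel h \<ge> 0" using nn by simp
  { assume "integral\<^sup>L lborel h = 0"
    then have ae: "AE x in lborel. h x = 0"
      using integral_nonneg_eq_0_iff_AE[OF int] nn by simp
    obtain d where d: "d > 0" "\<And>y. dist y c < d \<Longrightarrow> dist (h y) (h c) < h c"
      using cont pos unfolding continuous_at_eps_delta by (metis dist_commute)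
    have "ball c d \<subseteq> {x. h x \<noteq> 0}"
      using d by (force simp: dist_real_def dist_commute)
    moreover obtain N where N: "{x \<in> space lborel. \<not> h x = 0} \<subseteq> N" "emeasure lborel N = 0" "N \<in> sets lborel"
      using ae by (rule AE_E)
    ultimately have "ball c d \<subseteq> N" by auto
    then have "emeasure lborel (ball c d) \<le> 0"
      using emeasure_mono[OF _ N(3)] N(2) by metis
    moreover have "emeasure lborel (ball c d) > 0"
      using d(1) by (simp add: emeasure_ball)
    ultimately have False by simp }
  with ge show ?thesis by (metis less_eq_real_def)
qed

definition bump :: "'a::euclidean_space \<Rightarrow> real \<Rightarrow> 'a \<Rightarrow> real" where
  "bump c r y = Ef 1 (qf c r y)"

lemma bump_smooth: "smooth_fun (bump c r)"
  unfolding smooth_fun_def bump_def using Ef_comp_Ck[OF qf_smooth] by blast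

lemma bump_nonneg: "bump c r y \<ge> 0"
  by (simp add: bump_def Ef_def)

lemma bump_center: "r > 0 \<Longrightarrow> bump c r c > 0"
  by (simp add: bump_def Ef_def qf_def)

lemma bump_tsupport: assumes "r > 0" shows "tsupport (bump c r) \<subseteq> cball c r"
proof -
  have "{y. bump c r y \<noteq> 0} \<subseteq> cball c r"
  proof
    fix y assume "y \<in> {y. bump c r y \<noteq> 0}"
    then have "(y - c) \<bullet> (y - c) < r^2" by (auto simp: bump_def Ef_def qf_def split: if_splits)
    then have "norm (y - c) ^ 2 < r ^ 2" by (simp add: power2_norm_eq_inner)
    then have "norm (y - c) < r" using \<open>r > 0\<close> by (simp add: power_less_imp_less_base)
    then show "y \<in> cball c r" by (simp add: dist_norm norm_minus_commute)
  qed
  then show ?thesis unfolding tsupport_def by (rule closure_minimal) simp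
qed



lemma exists_ball_away:
  fixes \<Omega> :: "'a::euclidean_space set"
  assumes "open \<Omega>" "\<Omega> \<noteq> {}"
  shows "\<exists>c r. r > 0 \<and> cball c r \<subseteq> \<Omega> \<and> x0 \<notin> cball c r"
proof -
  obtain z where z: "z \<in> \<Omega>" using assms by auto
  obtain e where e: "e > 0" "ball z e \<subseteq> \<Omega>" using assms z open_contains_ball by blast
  show ?thesis
  proof (cases "x0 = z")
    case True
    obtain b :: 'a where b: "b \<in> Basis" using nonempty_Basis by blast
    then have nb: "norm b = 1" by simp
    define c where "c = z + (e/2) *\<^sub>R b"
    have dc: "dist z c = e/2" using e nb by (simp add: c_def dist_norm)
    have "cball c (e/4) \<subseteq> ball z e"
    proof
      fix y assume "y \<in> cball c (e/4)"
      then have "dist c y \<le> e/4" by simp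
      then have "dist z y \<le> e/2 + e/4" using dist_triangle[of z y c] dc by linarith
      then show "y \<in> ball z e" using e by simp
    qed
    moreover have "x0 \<notin> cball c (e/4)" using True dc e by (simp add: dist_commute)
    ultimately show ?thesis using e by (intro exI[of _ c] exI[of _ "e/4"]) auto
  next
    case False
    define r where "r = min (e/2) (dist x0 z / 2)"
    have r: "r > 0" using False e by (simp add: r_def)
    have "cball z r \<subseteq> ball z e" using e by (auto simp: r_def)
    moreover have "x0 \<notin> cball z r" using False r by (auto simp: r_def dist_commute)
    ultimately show ?thesis using r e by (intro exI[of _ z] exI[of _ r]) auto
  qed
qed

theorem lemma2p12:
  fixes \<Omega> :: "'a::euclidean_space set" and s :: real and x0 lam :: 'a
  assumes "0 < s" "s < 1" "open \<Omega>" "bounded \<Omega>" "\<Omega> \<noteq> {}"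
    and "x0 \<in> \<Omega> \<union> (- closure \<Omega>)"
  shows "\<exists>\<phi> \<in> Cc_inf \<Omega>. frac_grad s \<phi> x0 = lam"
proof -
  obtain c r where cr: "r > 0" "cball c r \<subseteq> \<Omega>" "x0 \<notin> cball c r"
    using exists_ball_away[OF assms(3,5)] by blast
  define S where "S = cball c r"
  define p where "p = real DIM('a) + s + 1"
  define G where "G \<phi> y = ((\<phi> x0 - \<phi> y) / norm (x0 - y) powr p) *\<^sub>R (x0 - y)" for \<phi> :: "'a \<Rightarrow> real" and y
  define W where "W = {\<phi>. smooth_fun \<phi> \<and> tsupport \<phi> \<subseteq> S}"
  define m where "m = mu_s s DIM('a)"
  define L where "L \<phi> = frac_grad s \<phi> x0" for \<phi>
  have m0: "m \<noteq> 0"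
  proof -
    have "(real DIM('a) + s + 1) / 2 > 0" "(1 - s) / 2 > 0" using assms(1,2) by auto
    then have "Gamma ((real DIM('a) + s + 1) / 2) > 0" "Gamma ((1 - s) / 2) > 0" by auto
    then show ?thesis by (simp add: m_def mu_s_def)
  qed
  have Ldef: "L \<phi> = m *\<^sub>R integral\<^sup>L lborel (G \<phi>)" for \<phi>
    unfolding L_def frac_grad_def G_def m_def p_def by simp
  have x0S: "x0 \<notin> S" using cr by (simp add: S_def)
  have zero_out: "\<phi> y = 0" if "\<phi> \<in> W" "y \<notin> S" for \<phi> y
  proof -
    have "{y. \<phi> y \<noteq> 0} \<subseteq> S" using that closure_subset[of "{y. \<phi> y \<noteq> 0}"]
      by (auto simp: W_def tsupport_def)
    then show ?thesis using that by auto
  qed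
  have Gind: "G \<phi> = (\<lambda>y. indicator S y *\<^sub>R G \<phi> y)" if "\<phi> \<in> W" for \<phi>
  proof
    fix y show "G \<phi> y = indicator S y *\<^sub>R G \<phi> y"
      using zero_out[OF that, of y] zero_out[OF that x0S] by (cases "y \<in> S") (auto simp: G_def)
  qed
  have contW: "continuous_on UNIV \<phi>" if "\<phi> \<in> W" for \<phi>
    using that unfolding W_def smooth_fun_def by (metis (mono_tags) Ck.simps(1) mem_Collect_eq)
  have Gcont: "continuous_on S (G \<phi>)" if "\<phi> \<in> W" for \<phi>
  proof -
    have "continuous_on S \<phi>" using contW[OF that] by (rule continuous_on_subset) simp
    moreover have "\<forall>y\<in>S. norm (x0 - y) \<noteq> 0" using x0S by auto
    ultimately show ?thesis unfolding G_def
      by (intro continuous_intros) auto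
  qed
  have intG: "integrable lborel (G \<phi>)" if "\<phi> \<in> W" for \<phi>
    using borel_integrable_compact[OF _ Gcont[OF that]] Gind[OF that] by (simp add: S_def)
  have W_sub: "W \<subseteq> Cc_inf \<Omega>"
  proof
    fix \<phi> assume "\<phi> \<in> W"
    then have "tsupport \<phi> \<subseteq> S" "smooth_fun \<phi>" by (auto simp: W_def)
    moreover have "compact (tsupport \<phi>)"
      using \<open>tsupport \<phi> \<subseteq> S\<close> unfolding tsupport_def S_def
      by (metis closed_closure compact_cball compact_Int_closed inf.absorb_iff2 inf_commute)
    ultimately show "\<phi> \<in> Cc_inf \<Omega>" using cr by (auto simp: Cc_inf_def S_def)
  qed
  have sub: "subspace (L ` W)"
    unfolding subspace_def
  proof (intro conjI ballI allI)
    have "(\<lambda>_. 0) \<in> W"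
      by (auto simp: W_def smooth_fun_def Ck_const tsupport_def)
    moreover have "G (\<lambda>_. 0) = (\<lambda>_. 0)" by (simp add: G_def fun_eq_iff)
    then have "L (\<lambda>_. 0) = 0" by (simp add: Ldef)
    ultimately show "0 \<in> L ` W" by (metis image_eqI)
  next
    fix u v assume "u \<in> L ` W" "v \<in> L ` W"
    then obtain \<phi> \<psi> where ph: "\<phi> \<in> W" "\<psi> \<in> W" "u = L \<phi>" "v = L \<psi>" by auto
    have "(\<lambda>y. \<phi> y + \<psi> y) \<in> W"
    proof -
      have "smooth_fun (\<lambda>y. \<phi> y + \<psi> y)" using ph by (auto simp: W_def smooth_fun_def intro: Ck_add)
      moreover have "tsupport (\<lambda>y. \<phi> y + \<psi> y) \<subseteq> tsupport \<phi> \<union> tsupport \<psi>"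
        unfolding tsupport_def closure_Un[symmetric] by (rule closure_mono) auto
      ultimately show ?thesis using ph by (auto simp: W_def)
    qed
    moreover have "L (\<lambda>y. \<phi> y + \<psi> y) = u + v"
    proof -
      have "G (\<lambda>y. \<phi> y + \<psi> y) = (\<lambda>y. G \<phi> y + G \<psi> y)"
        by (auto simp: G_def diff_divide_distrib add_divide_distrib scaleR_add_left algebra_simps)
      then show ?thesis using ph intG by (simp add: Ldef integral_add scaleR_add_right)
    qed
    ultimately show "u + v \<in> L ` W" by (metis image_eqI)
  next
    fix a :: real and u assume "u \<in> L ` W"
    then obtain \<phi> where ph: "\<phi> \<in> W" "u = L \<phi>" by auto
    have "(\<lambda>y. a * \<phi> y) \<in> W"
    proof -
      have "smooth_fun (\<lambda>y. a * \<phi> y)" using ph by (auto simp: W_def smooth_fun_def intro: Ck_cmul)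
      moreover have "tsupport (\<lambda>y. a * \<phi> y) \<subseteq> tsupport \<phi>"
        unfolding tsupport_def by (rule closure_mono) auto
      ultimately show ?thesis using ph by (auto simp: W_def)
    qed
    moreover have "L (\<lambda>y. a * \<phi> y) = a *\<^sub>R u"
    proof -
      have "G (\<lambda>y. a * \<phi> y) = (\<lambda>y. a *\<^sub>R G \<phi> y)"
        by (auto simp: G_def algebra_simps)
      then show ?thesis using ph by (simp add: Ldef)
    qed
    ultimately show "a *\<^sub>R u \<in> L ` W" by (metis image_eqI)
  qed
  show ?thesis
  proof (rule ccontr)
    assume "\<not> ?thesis"
    then have "lam \<notin> L ` W" using W_sub by (auto simp: L_def)
    moreover have sp: "span (L ` W) = L ` W" using sub by (simp only: span_eq_iff)
    ultimately have "span (L ` W) \<subset> span UNIV" unfolding sp by auto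
    then obtain e where e: "e \<noteq> 0" "\<And>y. y \<in> span (L ` W) \<Longrightarrow> orthogonal e y"
      using orthogonal_to_subspace_exists_gen by metis
    have eL: "e \<bullet> L \<phi> = 0" if "\<phi> \<in> W" for \<phi>
      using e(2)[OF span_base[OF imageI[OF that]]] by (simp add: orthogonal_def)
    have ne: "norm e > 0" using e by simp
    define a where "a = e \<bullet> (x0 - c)"
    define c' where "c' = (if a \<noteq> 0 then c else c + (r / (2 * norm e)) *\<^sub>R e)"
    define b where "b = e \<bullet> (x0 - c')"
    have dcc: "dist c c' \<le> r / 2" using cr ne by (auto simp: c'_def dist_norm)
    have b0: "b \<noteq> 0"
    proof (cases "a = 0")
      case True
      then have "b = a - (r / (2 * norm e)) * (e \<bullet> e)" by (simp add: b_def c'_def a_def inner_diff_right algebra_simps)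
      also have "\<dots> = - (r / 2) * norm e" using True ne by (simp add: power2_norm_eq_inner[symmetric] power2_eq_square)
      finally show ?thesis using cr ne by simp
    next
      case False then show ?thesis by (simp add: b_def c'_def a_def)
    qed
    define r' where "r' = min (r/2) (\<bar>b\<bar> / (2 * norm e))"
    have r'0: "r' > 0" using cr b0 ne by (simp add: r'_def)
    have sub': "cball c' r' \<subseteq> S"
    proof
      fix y assume "y \<in> cball c' r'"
      then have "dist c' y \<le> r/2" by (simp add: r'_def)
      then show "y \<in> S" using dcc dist_triangle[of c y c'] by (simp add: S_def)
    qed
    have sgn: "b * (e \<bullet> (x0 - y)) > 0" if "y \<in> cball c' r'" for y
    proof -
      have "\<bar>e \<bullet> (c' - y)\<bar> \<le> norm e * norm (c' - y)" using Cauchy_Schwarz_ineq2 by blast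
      also have "\<dots> \<le> norm e * r'" using that ne by (intro mult_left_mono) (auto simp: dist_norm)
      also have "\<dots> \<le> \<bar>b\<bar> / 2" using ne by (simp add: r'_def field_simps min_def)
      finally have i: "\<bar>e \<bullet> (c' - y)\<bar> \<le> \<bar>b\<bar> / 2" .
      have "e \<bullet> (x0 - y) = b + e \<bullet> (c' - y)" by (simp add: b_def inner_diff_right)
      then have "b * (e \<bullet> (x0 - y)) = b * b + b * (e \<bullet> (c' - y))" by (simp add: algebra_simps)
      moreover have "\<bar>b * (e \<bullet> (c' - y))\<bar> \<le> \<bar>b\<bar> * (\<bar>b\<bar> / 2)"
        unfolding abs_mult by (rule mult_left_mono[OF i]) simp
      moreover have "b * b = \<bar>b\<bar> * \<bar>b\<bar>" by (simp add: abs_mult_self_eq)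
      moreover have "\<bar>b\<bar> > 0" using b0 by simp
      moreover have "\<bar>b\<bar> * \<bar>b\<bar> > 0" using b0 by (intro mult_pos_pos) auto
      ultimately show ?thesis by linarith
    qed
    define \<phi> where "\<phi> = bump c' r'"
    have phW: "\<phi> \<in> W"
      using bump_smooth[of c' r'] subset_trans[OF bump_tsupport[OF r'0, of c'] sub'] by (simp add: W_def \<phi>_def)
    have ph_out: "\<phi> y = 0" if "y \<notin> cball c' r'" for y
      using that bump_tsupport[OF r'0, of c'] closure_subset[of "{y. bump c' r' y \<noteq> 0}"]
      by (auto simp: \<phi>_def tsupport_def)
    have phx0: "\<phi> x0 = 0" using zero_out[OF phW x0S] .
    define h where "h y = - b * (e \<bullet> G \<phi> y)" for y
    have h_eq: "h y = \<phi> y * (b * (e \<bullet> (x0 - y))) / norm (x0 - y) powr p" for y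
      by (simp add: h_def G_def phx0)
    have inth: "integrable lborel h"
      unfolding h_def using intG[OF phW] by (intro integrable_mult_right integrable_inner_right) auto
    have "integral\<^sup>L lborel h = - b * (e \<bullet> integral\<^sup>L lborel (G \<phi>))"
      unfolding h_def using intG[OF phW] by simp
    also have "e \<bullet> integral\<^sup>L lborel (G \<phi>) = 0"
      using eL[OF phW] m0 by (simp add: Ldef)
    finally have h0: "integral\<^sup>L lborel h = 0" by simp
    have hnn: "h y \<ge> 0" for y
    proof (cases "y \<in> cball c' r'")
      case True
      then show ?thesis using sgn[OF True] bump_nonneg[of c' r' y] by (simp add: h_eq \<phi>_def)
    next
      case False then show ?thesis by (simp add: h_eq ph_out)
    qed
    have c'int: "c' \<in> interior S"
    proof -
      have "c' \<in> ball c r" using dcc cr by simp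
      moreover have "ball c r \<subseteq> S" by (auto simp: S_def)
      ultimately show ?thesis by (meson interior_maximal open_ball subsetD)
    qed
    have hcont: "isCont h c'"
      unfolding h_def using continuous_on_interior[OF Gcont[OF phW] c'int]
      by (intro continuous_intros)
    have hpos: "h c' > 0"
    proof -
      have "c' \<in> cball c' r'" using r'0 by simp
      moreover have "c' \<in> S" using sub' r'0 by (meson centre_in_cball less_imp_le subsetD)
      then have "norm (x0 - c') > 0" using x0S by auto
      ultimately show ?thesis using sgn bump_center[OF r'0, of c'] by (simp add: h_eq \<phi>_def)
    qed
    show False using pos_int[OF inth hnn hcont hpos] h0 by simp
  qed
qed

end
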